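(* For every integer $r\ge 3$ and every integer $n>6^r$, $$g(r,n)\leq n-\frac{1}{12r}n^{\frac{r-1}{r}}.$$
   Context: A hypergraph is $r$-uniform if every edge contains exactly $r$ vertices. An $r$-uniform hypergraph is $r$-partite if its vertex set can be partitioned into $r$ sets $V_1,\dots,V_r$ such that every edge contains exactly one vertex from each $V_i$. A matching is a set of pairwise vertex-disjoint edges. Given a collection (repetitions allowed) of matchings $M_1,\dots,M_n$ in a hypergraph, a matching $M\subseteq \bigcup_{i=1}^n M_i$ is rainbow if there is an injection $\phi:M\to[n]$ such that every edge $e\in M$ belongs to $M_{\phi(e)}$. $g(r,n)$ denotes the largest integer $s$ such that every collection of $n$ matchings, each of size $n$, in an $r$-partite $r$-uniform hypergraph admits a rainbow matching of size $s$. *)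

theory Defs
  imports Complex_Main
begin

definition r_partite_uniform :: "nat \<Rightarrow> 'v set set \<Rightarrow> bool" where
  "r_partite_uniform r H \<longleftrightarrow>
     (\<exists>V :: nat \<Rightarrow> 'v set.
        (\<forall>i<r. \<forall>j<r. i \<noteq> j \<longrightarrow> V i \<inter> V j = {}) \<and>
        (\<forall>e\<in>H. finite e \<and> card e = r \<and> e \<subseteq> (\<Union>i<r. V i) \<and> (\<forall>i<r. card (e \<inter> V i) = 1)))"

definition matching :: "'v set set \<Rightarrow> bool" where
  "matching M \<longleftrightarrow> (\<forall>e\<in>M. \<forall>f\<in>M. e \<noteq> f \<longrightarrow> e \<inter> f = {})"

text \<open>Collection of n matchings indexed by {0..<n} (standing for [n]).\<close>

definition rainbow :: "nat \<Rightarrow> (nat \<Rightarrow> 'v set set) \<Rightarrow> 'v set set \<Rightarrow> bool" where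
  "rainbow n Ms M \<longleftrightarrow> matching M \<and> M \<subseteq> (\<Union>i<n. Ms i) \<and>
     (\<exists>\<phi>. inj_on \<phi> M \<and> (\<forall>e\<in>M. \<phi> e < n \<and> e \<in> Ms (\<phi> e)))"

text \<open>Vertices are taken from nat (all hypergraphs involved are finite/countable).\<close>

definition g :: "nat \<Rightarrow> nat \<Rightarrow> nat" where
  "g r n = (GREATEST s. \<forall>(H :: nat set set) (Ms :: nat \<Rightarrow> nat set set).
      (r_partite_uniform r H \<and>
       (\<forall>i<n. matching (Ms i) \<and> Ms i \<subseteq> H \<and> finite (Ms i) \<and> card (Ms i) = n))
      \<longrightarrow> (\<exists>M. rainbow n Ms M \<and> finite M \<and> card M = s))"

end

theory Submission
  imports Defs "HOL-Number_Theory.Cong" "HOL-Library.Nat_Bijection"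
begin


lemma exists_cross:
  fixes P :: "nat \<Rightarrow> bool"
  shows "P 0 \<Longrightarrow> \<not> P L \<Longrightarrow> \<exists>t<L. P t \<and> \<not> P (Suc t)"
proof (induction L)
  case 0 then show ?case by simp
next
  case (Suc L)
  show ?case
  proof (cases "P L")
    case True then show ?thesis using Suc by blast
  next
    case False then show ?thesis using Suc by (meson less_SucI)
  qed
qed

lemma shift_inj:
  fixes m c :: nat
  assumes "B < m" "B' < m" "(c + B) mod m = (c + B') mod m"
  shows "B = B'"
proof -
  have "[c + B = c + B'] (mod m)" using assms(3) by (simp add: cong_def)
  then have "[B = B'] (mod m)" by (simp add: cong_add_lcancel_nat)
  then show ?thesis using assms(1,2) by (simp add: cong_def)
qed

lemma mult_inj:
  fixes m c k x x' :: nat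
  assumes "odd m" "x < m" "x' < m" "(2^k * x + c) mod m = (2^k * x' + c) mod m"
  shows "x = x'"
proof -
  have "[2^k * x + c = 2^k * x' + c] (mod m)" using assms(4) by (simp add: cong_def)
  then have "[2^k * x = 2^k * x'] (mod m)" by (metis add.commute cong_add_lcancel_nat)
  moreover have "coprime ((2::nat)^k) m" using assms(1) by simp
  ultimately have "[x = x'] (mod m)" using cong_mult_lcancel_nat by blast
  then show ?thesis using assms(2,3) by (simp add: cong_def)
qed

lemma expansion:
  fixes m L :: nat and S :: "nat set"
  assumes odd: "odd m" and Sm: "S \<subseteq> {..<m}" and mL: "m \<le> 2^L"
  shows "card S * (m - card S) \<le> L * 2^L *
     card (((\<lambda>x. (2*x) mod m) ` S \<union> (\<lambda>x. (2*x+1) mod m) ` S) - S)"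
proof -
  define Bd where "Bd = ((\<lambda>x. (2*x) mod m) ` S \<union> (\<lambda>x. (2*x+1) mod m) ` S) - S"
  define f where "f x B t = (2^t * x + B div 2^(L-t)) mod m" for x B t :: nat
  define Pi where "Pi = {(x,B). x \<in> S \<and> B < 2^L \<and> (2^L*x + B) mod m \<notin> S}"
  define Pt where "Pt t = {(x,B). (x,B) \<in> Pi \<and> f x B t \<in> S \<and> f x B (Suc t) \<notin> S}" for t
  have m0: "m > 0" using odd by (cases m) auto
  have finS: "finite S" using Sm finite_subset by blast
  have step: "f x B (Suc t) = (2 * f x B t + (B div 2^(L - Suc t)) mod 2) mod m"
    if "t < L" for x B t
  proof -
    have e: "2^(L-t) = (2::nat)^(L - Suc t) * 2" using that
      by (metis Suc_diff_Suc power_Suc2)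
    have q: "B div 2^(L-t) = (B div 2^(L - Suc t)) div 2"
      by (simp add: e div_mult2_eq)
    define q' where "q' = B div 2^(L - Suc t)"
    have "2^(Suc t) * x + q' = 2 * (2^t * x + q' div 2) + q' mod 2" by simp
    then have "f x B (Suc t) = (2 * (2^t * x + q' div 2) + q' mod 2) mod m"
      unfolding f_def q'_def by (simp add: algebra_simps)
    also have "\<dots> = (2 * ((2^t * x + q' div 2) mod m) + q' mod 2) mod m"
      by (metis mod_add_left_eq mod_mult_right_eq)
    finally show ?thesis unfolding f_def q'_def q by simp
  qed
  have f0: "f x B 0 = x" if "x < m" "B < 2^L" for x B
    using that by (simp add: f_def)
  have fL: "f x B L = (2^L*x + B) mod m" for x B by (simp add: f_def)
  have cover: "Pi \<subseteq> (\<Union>t<L. Pt t)"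
  proof
    fix p assume p: "p \<in> Pi"
    obtain x B where pxB: "p = (x,B)" by fastforce
    have x: "x \<in> S" "B < 2^L" "(2^L*x + B) mod m \<notin> S" using p pxB Pi_def by auto
    have "x < m" using x Sm by auto
    then have "f x B 0 \<in> S" "f x B L \<notin> S" using f0 fL x by auto
    then obtain t where "t < L" "f x B t \<in> S" "f x B (Suc t) \<notin> S"
      using exists_cross[of "\<lambda>t. f x B t \<in> S"] by blast
    then show "p \<in> (\<Union>t<L. Pt t)" using p pxB Pt_def by auto
  qed
  have finPi: "finite Pi"
  proof -
    have "Pi \<subseteq> S \<times> {..<2^L}" unfolding Pi_def by auto
    then show ?thesis using finS finite_subset by blast
  qed
  have Pt_bound: "card (Pt t) \<le> card Bd * 2^L" if "t < L" for t
  proof -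
    have inj: "inj_on (\<lambda>(x,B). (f x B (Suc t), B)) (Pt t)"
    proof (rule inj_onI)
      fix p p' assume p: "p \<in> Pt t" and p': "p' \<in> Pt t"
        and eq: "(\<lambda>(x,B). (f x B (Suc t), B)) p = (\<lambda>(x,B). (f x B (Suc t), B)) p'"
      obtain x B where pxB: "p = (x,B)" by fastforce
      obtain x' B' where pxB': "p' = (x',B')" by fastforce
      have BB: "B = B'" and ff: "f x B (Suc t) = f x' B (Suc t)" using eq pxB pxB' by auto
      have "x < m" "x' < m" using p p' pxB pxB' Pt_def Pi_def Sm by auto
      then show "p = p'" using mult_inj[OF odd _ _ ff[unfolded f_def]] BB pxB pxB' by auto
    qed
    have img: "(\<lambda>(x,B). (f x B (Suc t), B)) ` (Pt t) \<subseteq> Bd \<times> {..<2^L}"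
    proof
      fix q assume "q \<in> (\<lambda>(x,B). (f x B (Suc t), B)) ` (Pt t)"
      then obtain x B where xB: "(x,B) \<in> Pt t" and q: "q = (f x B (Suc t), B)" by auto
      have h: "f x B t \<in> S" "f x B (Suc t) \<notin> S" "B < 2^L" using xB Pt_def Pi_def by auto
      have "(B div 2^(L - Suc t)) mod 2 = 0 \<or> (B div 2^(L - Suc t)) mod 2 = 1" by auto
      then have "f x B (Suc t) \<in> (\<lambda>x. (2*x) mod m) ` S \<union> (\<lambda>x. (2*x+1) mod m) ` S"
        using step[OF that, of x B] h(1) by auto
      then show "q \<in> Bd \<times> {..<2^L}" using q h Bd_def by auto
    qed
    have "finite (Bd \<times> {..<(2::nat)^L})"
      using finS Bd_def by auto
    then have "card (Pt t) \<le> card (Bd \<times> {..<(2::nat)^L})"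
      using card_inj_on_le[OF inj img] by blast
    then show ?thesis by (simp add: card_cartesian_product)
  qed
  have upper: "card Pi \<le> L * 2^L * card Bd"
  proof -
    have "card Pi \<le> card (\<Union>t<L. Pt t)"
      using cover by (intro card_mono) (auto simp: Pt_def intro: finite_subset[OF _ finPi])
    also have "\<dots> \<le> (\<Sum>t<L. card (Pt t))" by (rule card_UN_le) simp
    also have "\<dots> \<le> (\<Sum>t<L. card Bd * 2^L)" by (rule sum_mono) (simp add: Pt_bound)
    also have "\<dots> = L * (card Bd * 2^L)" by (simp only: sum_constant card_lessThan of_nat_id)
    finally have "card Pi \<le> L * (card Bd * 2^L)" .
    then show ?thesis by (simp only: mult.commute[of "card Bd"] mult.assoc)
  qed
  have lower: "card S * (m - card S) \<le> card Pi"
  proof -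
    define Q where "Q x = {B. B < m \<and> (2^L*x + B) mod m \<notin> S}" for x
    have cQ: "card (Q x) = m - card S" for x
    proof -
      define h where "h B = (2^L*x + B) mod m" for B
      have injh: "inj_on h {..<m}"
      proof (rule inj_onI)
        fix B B' assume "B \<in> {..<m}" "B' \<in> {..<m}" "h B = h B'"
        then show "B = B'" unfolding h_def using shift_inj by blast
      qed
      have hlt: "h B < m" for B unfolding h_def using m0 by simp
      have himg: "h ` {..<m} = {..<m}"
        by (rule endo_inj_surj) (use hlt injh in auto)
      have QS: "Q x = {B \<in> {..<m}. h B \<notin> S}" unfolding Q_def h_def by auto
      have "h ` (Q x) = {..<m} - S"
      proof
        show "h ` Q x \<subseteq> {..<m} - S" unfolding QS using hlt by blast
        show "{..<m} - S \<subseteq> h ` Q x"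
        proof
          fix y assume y: "y \<in> {..<m} - S"
          then have "y \<in> h ` {..<m}" using himg by blast
          then obtain B where "B < m" "y = h B" by blast
          then show "y \<in> h ` Q x" using y unfolding QS by blast
        qed
      qed
      moreover have "inj_on h (Q x)" using injh unfolding QS by (rule inj_on_subset) blast
      ultimately have "card (Q x) = card ({..<m} - S)" by (metis card_image)
      also have "\<dots> = m - card S" using Sm finS by (simp add: card_Diff_subset)
      finally show ?thesis .
    qed
    have "Sigma S Q \<subseteq> Pi" unfolding Pi_def Q_def using mL by auto
    then have "card (Sigma S Q) \<le> card Pi" using finPi by (simp add: card_mono)
    moreover have "card (Sigma S Q) = card S * (m - card S)"
      using finS cQ by (simp add: card_SigmaI Q_def)
    ultimately show ?thesis by simp
  qed
  show ?thesis using le_trans[OF lower upper] unfolding Bd_def .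
qed



definition E :: "nat \<Rightarrow> nat \<Rightarrow> nat" where "E i v = prod_encode (i, v)"
definition ed :: "nat \<Rightarrow> (nat \<Rightarrow> nat) \<Rightarrow> nat set" where
  "ed r f = (\<lambda>i. E i (f i)) ` {..<r}"

lemma E_eq[simp]: "E i v = E j w \<longleftrightarrow> i = j \<and> v = w"
  by (simp add: E_def)

lemma ed_disj: "ed r f \<inter> ed r f' = {} \<longleftrightarrow> (\<forall>i<r. f i \<noteq> f' i)"
  unfolding ed_def by auto

lemma ed_eq: "ed r f = ed r f' \<longleftrightarrow> (\<forall>i<r. f i = f' i)"
proof
  assume h: "ed r f = ed r f'"
  show "\<forall>i<r. f i = f' i"
  proof (intro allI impI)
    fix i assume "i < r"
    then have "E i (f i) \<in> ed r f'" using h unfolding ed_def by auto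
    then show "f i = f' i" unfolding ed_def by auto
  qed
next
  assume "\<forall>i<r. f i = f' i"
  then show "ed r f = ed r f'" unfolding ed_def by (auto intro!: image_cong)
qed

lemma ed_partite:
  assumes "\<forall>e\<in>H. \<exists>f. e = ed r f"
  shows "r_partite_uniform r H"
  unfolding r_partite_uniform_def
proof (intro exI[of _ "\<lambda>i. range (E i)"] conjI ballI allI impI)
  fix i j assume "i < r" "j < r" "i \<noteq> j"
  then show "range (E i) \<inter> range (E j) = {}" by auto
next
  fix e assume "e \<in> H"
  then obtain f where e: "e = ed r f" using assms by blast
  show "finite e" unfolding e ed_def by simp
  have "inj_on (\<lambda>i. E i (f i)) {..<r}" by (auto intro: inj_onI)
  then show "card e = r" unfolding e ed_def by (simp add: card_image)
  show "e \<subseteq> (\<Union>i<r. range (E i))" unfolding e ed_def by auto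
  fix i assume "i < r"
  then have "e \<inter> range (E i) = {E i (f i)}" unfolding e ed_def by auto
  then show "card (e \<inter> range (E i)) = 1" by simp
qed

definition mm :: "nat \<Rightarrow> nat" where "mm n = (if odd n then n else n - 1)"
definition sg :: "nat \<Rightarrow> nat \<Rightarrow> nat" where
  "sg n v = (if v < mm n then (2*v) mod mm n else v + n)"
definition tu :: "nat \<Rightarrow> nat \<Rightarrow> nat" where
  "tu n v = (if v < mm n then (2*v+1) mod mm n else v + n)"
definition fb :: "nat \<Rightarrow> nat \<Rightarrow> nat \<Rightarrow> nat" where
  "fb n v i = (if i = 1 then sg n v else if i = 2 then tu n v else v)"
definition EA :: "nat \<Rightarrow> nat \<Rightarrow> nat set" where "EA r v = ed r (\<lambda>i. v)"
definition EB :: "nat \<Rightarrow> nat \<Rightarrow> nat \<Rightarrow> nat set" where "EB r n v = ed r (fb n v)"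
definition MS :: "nat \<Rightarrow> nat \<Rightarrow> nat \<Rightarrow> nat set set" where
  "MS r n i = (if i < n - n div 2 then EA r ` {..<n} else EB r n ` {..<n})"
definition HH :: "nat \<Rightarrow> nat \<Rightarrow> nat set set" where
  "HH r n = EA r ` {..<n} \<union> EB r n ` {..<n}"

lemma mm_props: "n \<ge> 4 \<Longrightarrow> odd (mm n) \<and> mm n \<le> n \<and> n \<le> mm n + 1 \<and> mm n \<ge> 3"
  unfolding mm_def by auto

lemma EA_disj: "r \<ge> 3 \<Longrightarrow> v \<noteq> h \<Longrightarrow> EA r v \<inter> EA r h = {}"
  unfolding EA_def ed_disj by auto

lemma sg_inj: assumes "n \<ge> 4" "sg n v = sg n h" shows "v = h"
proof -
  have o: "odd (mm n)" "mm n \<le> n" using mm_props[OF assms(1)] by auto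
  consider "v < mm n" "h < mm n" | "v < mm n" "\<not> h < mm n" | "\<not> v < mm n" "h < mm n"
    | "\<not> v < mm n" "\<not> h < mm n" by blast
  then show ?thesis
  proof cases
    case 1
    then have "(2^1*v+0) mod mm n = (2^1*h+0) mod mm n" using assms(2) by (simp add: sg_def)
    then show ?thesis using mult_inj[OF o(1)] 1 by blast
  next
    case 2
    then have "sg n v < mm n" "sg n h \<ge> mm n" by (simp_all add: sg_def)
    then show ?thesis using assms(2) by simp
  next
    case 3
    then have "sg n h < mm n" "sg n v \<ge> mm n" by (simp_all add: sg_def)
    then show ?thesis using assms(2) by simp
  next
    case 4
    then show ?thesis using assms(2) by (simp add: sg_def)
  qed
qed

lemma tu_inj: assumes "n \<ge> 4" "tu n v = tu n h" shows "v = h"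
proof -
  have o: "odd (mm n)" "mm n \<le> n" using mm_props[OF assms(1)] by auto
  consider "v < mm n" "h < mm n" | "v < mm n" "\<not> h < mm n" | "\<not> v < mm n" "h < mm n"
    | "\<not> v < mm n" "\<not> h < mm n" by blast
  then show ?thesis
  proof cases
    case 1
    then have "(2^1*v+1) mod mm n = (2^1*h+1) mod mm n" using assms(2) by (simp add: tu_def)
    then show ?thesis using mult_inj[OF o(1)] 1 by blast
  next
    case 2
    then have "tu n v < mm n" "tu n h \<ge> mm n" by (simp_all add: tu_def)
    then show ?thesis using assms(2) by simp
  next
    case 3
    then have "tu n h < mm n" "tu n v \<ge> mm n" by (simp_all add: tu_def)
    then show ?thesis using assms(2) by simp
  next
    case 4
    then show ?thesis using assms(2) by (simp add: tu_def)
  qed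
qed

lemma EB_disj: "r \<ge> 3 \<Longrightarrow> n \<ge> 4 \<Longrightarrow> v \<noteq> h \<Longrightarrow> EB r n v \<inter> EB r n h = {}"
proof -
  assume a: "r \<ge> 3" "n \<ge> 4" "v \<noteq> h"
  have "fb n v i \<noteq> fb n h i" for i
    using a sg_inj[OF a(2), of v h] tu_inj[OF a(2), of v h] by (auto simp: fb_def)
  then show ?thesis unfolding EB_def ed_disj by blast
qed

lemma EA_inj: "r \<ge> 3 \<Longrightarrow> inj_on (EA r) X"
proof (rule inj_onI)
  fix v h assume a: "r \<ge> 3" "EA r v = EA r h"
  then have "\<forall>i<r. v = h" unfolding EA_def ed_eq by simp
  moreover have "0 < r" using a by simp
  ultimately show "v = h" by blast
qed

lemma EB_inj: "r \<ge> 3 \<Longrightarrow> inj_on (EB r n) X"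
proof (rule inj_onI)
  fix v h assume "r \<ge> 3" "EB r n v = EB r n h"
  then have "fb n v 0 = fb n h 0" unfolding EB_def ed_eq by auto
  then show "v = h" by (simp add: fb_def)
qed

lemma EA_EB: assumes "r \<ge> 3" "n \<ge> 4" shows "EA r v \<noteq> EB r n h"
proof
  assume "EA r v = EB r n h"
  then have h: "\<forall>i<r. v = fb n h i" unfolding EA_def EB_def ed_eq by auto
  then have "v = h" "v = sg n h" "v = tu n h" using assms(1) h[rule_format, of 0]
    h[rule_format, of 1] h[rule_format, of 2] by (auto simp: fb_def)
  define m where "m = mm n"
  have m3: "m \<ge> 3" using mm_props[OF assms(2)] m_def by auto
  show False
  proof (cases "h < m")
    case True
    then have a: "(2*h) mod m = h" and b: "(2*h+1) mod m = h"
      using \<open>v = h\<close> \<open>v = sg n h\<close> \<open>v = tu n h\<close> by (auto simp: sg_def tu_def m_def)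
    have "(2*h+1) mod m = ((2*h) mod m + 1) mod m" by (simp add: mod_Suc_eq)
    then have "(h + 1) mod m = h" using a b by simp
    show False
    proof (cases "h + 1 < m")
      case True
      then show False using \<open>(h + 1) mod m = h\<close> by simp
    next
      case False
      then have "h + 1 = m" using \<open>h < m\<close> by simp
      then show False using \<open>(h + 1) mod m = h\<close> m3 by simp
    qed
  next
    case False
    then show False using \<open>v = h\<close> \<open>v = sg n h\<close> assms(2) by (auto simp: sg_def m_def)
  qed
qed



lemma instance_ok:
  assumes r: "r \<ge> 3" and n: "n \<ge> 4"
  shows "r_partite_uniform r (HH r n) \<and> (\<forall>i<n. matching (MS r n i) \<and> MS r n i \<subseteq> HH r n
           \<and> finite (MS r n i) \<and> card (MS r n i) = n)"
proof
  show "r_partite_uniform r (HH r n)"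
  proof (rule ed_partite, rule ballI)
    fix e assume "e \<in> HH r n"
    then obtain v where "e = EA r v \<or> e = EB r n v" unfolding HH_def by blast
    then show "\<exists>f. e = ed r f" unfolding EA_def EB_def by blast
  qed
  have mA: "matching (EA r ` {..<n})" unfolding matching_def
  proof (intro ballI impI)
    fix e f assume "e \<in> EA r ` {..<n}" "f \<in> EA r ` {..<n}" "e \<noteq> f"
    then obtain v w where "e = EA r v" "f = EA r w" "v \<noteq> w" by blast
    then show "e \<inter> f = {}" using EA_disj[OF r] by simp
  qed
  have mB: "matching (EB r n ` {..<n})" unfolding matching_def
  proof (intro ballI impI)
    fix e f assume "e \<in> EB r n ` {..<n}" "f \<in> EB r n ` {..<n}" "e \<noteq> f"
    then obtain v w where "e = EB r n v" "f = EB r n w" "v \<noteq> w" by blast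
    then show "e \<inter> f = {}" using EB_disj[OF r n] by simp
  qed
  have cA: "card (EA r ` {..<n}) = n" using EA_inj[OF r] by (simp add: card_image)
  have cB: "card (EB r n ` {..<n}) = n" using EB_inj[OF r] by (simp add: card_image)
  show "\<forall>i<n. matching (MS r n i) \<and> MS r n i \<subseteq> HH r n \<and> finite (MS r n i) \<and> card (MS r n i) = n"
  proof (intro allI impI)
    fix i assume "i < n"
    show "matching (MS r n i) \<and> MS r n i \<subseteq> HH r n \<and> finite (MS r n i) \<and> card (MS r n i) = n"
    proof (cases "i < n - n div 2")
      case True
      then have "MS r n i = EA r ` {..<n}" by (simp add: MS_def)
      then show ?thesis using mA cA unfolding HH_def by simp
    next
      case False
      then have "MS r n i = EB r n ` {..<n}" by (simp add: MS_def)
      then show ?thesis using mB cB unfolding HH_def by simp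
    qed
  qed
qed

lemma rainbow_bound:
  assumes r: "r \<ge> 3" and n: "n \<ge> 4" and rb: "rainbow n (MS r n) M" and fM: "finite M"
  shows "\<exists>S. S \<subseteq> {..<mm n} \<and> card S \<le> n div 2 \<and> card M \<le> card S + (n - n div 2) + 1 \<and>
    card M + card (((\<lambda>x. (2*x) mod mm n) ` S \<union> (\<lambda>x. (2*x+1) mod mm n) ` S) - S) \<le> n + 1"
proof -
  define m where "m = mm n"
  have mp: "odd m" "m \<le> n" "n \<le> m + 1" "m \<ge> 3" using mm_props[OF n] m_def by auto
  define A where "A = EA r"
  define B where "B = EB r n"
  have AB: "A x \<noteq> B y" for x y unfolding A_def B_def using EA_EB[OF r n] by blast
  have injA: "inj_on A X" for X unfolding A_def using EA_inj[OF r] by simp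
  have injB: "inj_on B X" for X unfolding B_def using EB_inj[OF r] by simp
  have match: "matching M" and sub: "M \<subseteq> (\<Union>i<n. MS r n i)" using rb unfolding rainbow_def by auto
  obtain \<phi> where phi: "inj_on \<phi> M" "\<forall>e\<in>M. \<phi> e < n \<and> e \<in> MS r n (\<phi> e)"
    using rb unfolding rainbow_def by blast
  have Msub: "M \<subseteq> A ` {..<n} \<union> B ` {..<n}"
  proof -
    have "MS r n i \<subseteq> A ` {..<n} \<union> B ` {..<n}" for i
      unfolding MS_def A_def B_def by simp
    then show ?thesis using sub by blast
  qed
  define S1 where "S1 = {x \<in> {..<n}. A x \<in> M}"
  define S2 where "S2 = {x \<in> {..<n}. B x \<in> M}"
  have MU: "M = A ` S1 \<union> B ` S2" using Msub unfolding S1_def S2_def by blast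
  have fin1: "finite S1" "finite S2" unfolding S1_def S2_def by auto
  have cM: "card M = card S1 + card S2"
  proof -
    have "A ` S1 \<inter> B ` S2 = {}" using AB by blast
    then have "card M = card (A ` S1) + card (B ` S2)"
      unfolding MU using fin1 by (simp add: card_Un_disjoint)
    then show ?thesis using injA injB by (simp add: card_image)
  qed
  have c1: "card S1 \<le> n - n div 2"
  proof -
    have "\<phi> ` (A ` S1) \<subseteq> {..< n - n div 2}"
    proof
      fix i assume "i \<in> \<phi> ` (A ` S1)"
      then obtain x where x: "x \<in> S1" "i = \<phi> (A x)" by blast
      then have "A x \<in> M" unfolding S1_def by blast
      then have "A x \<in> MS r n i" "i < n" using phi x by auto
      show "i \<in> {..< n - n div 2}"
      proof (rule ccontr)
        assume "i \<notin> {..< n - n div 2}"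
        then have "MS r n i = B ` {..<n}" unfolding MS_def B_def by simp
        then have "A x \<in> B ` {..<n}" using \<open>A x \<in> MS r n i\<close> by simp
        then obtain z where "A x = B z" by blast
        then show False using AB[of x z] by simp
      qed
    qed
    moreover have "inj_on \<phi> (A ` S1)" by (rule inj_on_subset[OF phi(1)]) (use MU in blast)
    ultimately have "card (A ` S1) \<le> n - n div 2"
      using card_inj_on_le[of \<phi> "A ` S1" "{..< n - n div 2}"] by simp
    then show ?thesis using injA by (simp add: card_image)
  qed
  have c2: "card S2 \<le> n div 2"
  proof -
    have "\<phi> ` (B ` S2) \<subseteq> {n - n div 2..<n}"
    proof
      fix i assume "i \<in> \<phi> ` (B ` S2)"
      then obtain x where x: "x \<in> S2" "i = \<phi> (B x)" by blast
      then have "B x \<in> M" unfolding S2_def by blast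
      then have "B x \<in> MS r n i" "i < n" using phi x by auto
      have "\<not> i < n - n div 2"
      proof
        assume "i < n - n div 2"
        then have "MS r n i = A ` {..<n}" unfolding MS_def A_def by simp
        then have "B x \<in> A ` {..<n}" using \<open>B x \<in> MS r n i\<close> by simp
        then obtain z where "B x = A z" by blast
        then show False using AB[of z x] by simp
      qed
      then show "i \<in> {n - n div 2..<n}" unfolding atLeastLessThan_iff using \<open>i < n\<close> by linarith
    qed
    moreover have "inj_on \<phi> (B ` S2)" by (rule inj_on_subset[OF phi(1)]) (use MU in blast)
    ultimately have "card (B ` S2) \<le> card {n - n div 2..<n}"
      using card_inj_on_le[of \<phi> "B ` S2" "{n - n div 2..<n}"] by simp
    then show ?thesis using injB by (simp add: card_image)
  qed
  have disj: "x \<noteq> y \<and> x \<noteq> sg n y \<and> x \<noteq> tu n y" if "x \<in> S1" "y \<in> S2" for x y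
  proof -
    have "A x \<in> M" "B y \<in> M" using that unfolding S1_def S2_def by auto
    then have "A x \<inter> B y = {}" using match AB[of x y] unfolding matching_def by blast
    then have "\<forall>i<r. x \<noteq> fb n y i" unfolding A_def B_def EA_def EB_def ed_disj by simp
    then have "x \<noteq> fb n y 0" "x \<noteq> fb n y 1" "x \<noteq> fb n y 2" using r by auto
    then show ?thesis by (simp add: fb_def)
  qed
  define S where "S = S2 \<inter> {..<m}"
  define s1 where "s1 = (\<lambda>x. (2*x) mod m)"
  define t1 where "t1 = (\<lambda>x. (2*x+1) mod m)"
  define Y where "Y = (s1 ` S \<union> t1 ` S) - S"
  define X where "X = S \<union> Y"
  have finS: "finite S" unfolding S_def using fin1 by simp
  have Xsub: "X \<subseteq> {..<m}" unfolding X_def Y_def S_def s1_def t1_def using mp by auto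
  have sgS: "sg n y = s1 y" "tu n y = t1 y" if "y \<in> S" for y
    using that unfolding S_def s1_def t1_def sg_def tu_def m_def by auto
  have S1X: "S1 \<inter> X = {}"
  proof -
    have "x \<notin> X" if "x \<in> S1" for x
    proof
      assume "x \<in> X"
      then consider "x \<in> S" | y where "y \<in> S" "x = s1 y" | y where "y \<in> S" "x = t1 y"
        unfolding X_def Y_def by blast
      then show False
      proof cases
        case 1 then show False using disj[OF that] unfolding S_def by blast
      next
        case 2 then show False using disj[OF that, of y] sgS[of y] unfolding S_def by auto
      next
        case 3 then show False using disj[OF that, of y] sgS[of y] unfolding S_def by auto
      qed
    qed
    then show ?thesis by blast
  qed
  have finX: "finite X" using Xsub finite_subset by blast
  have "card (S1 \<union> X) \<le> n"
  proof -
    have "S1 \<union> X \<subseteq> {..<n}" using Xsub mp unfolding S1_def by auto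
    then show ?thesis by (metis card_lessThan card_mono finite_lessThan)
  qed
  then have h1: "card S1 + card X \<le> n" using S1X fin1 finX by (simp add: card_Un_disjoint)
  have cX: "card X = card S + card Y"
    unfolding X_def using finS by (subst card_Un_disjoint) (auto simp: Y_def)
  have c2S: "card S2 \<le> card S + 1"
  proof -
    have "S2 \<subseteq> S \<union> {m..<n}" unfolding S_def S2_def by auto
    then have "card S2 \<le> card (S \<union> {m..<n})" using finS by (simp add: card_mono)
    also have "\<dots> \<le> card S + card {m..<n}" by (rule card_Un_le)
    finally show ?thesis using mp by simp
  qed
  have cS: "card S \<le> card S2" unfolding S_def using fin1 by (simp add: card_mono)
  show ?thesis
  proof (intro exI[of _ S] conjI)
    show "S \<subseteq> {..<mm n}" unfolding S_def m_def by auto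
    show "card S \<le> n div 2" using cS c2 by simp
    show "card M \<le> card S + (n - n div 2) + 1" using cM c1 c2S by simp
    show "card M + card (((\<lambda>x. (2*x) mod mm n) ` S \<union> (\<lambda>x. (2*x+1) mod mm n) ` S) - S) \<le> n + 1"
      using cM c2S h1 cX unfolding Y_def s1_def t1_def m_def by simp
  qed
qed



lemma twelve_le: "r \<ge> 3 \<Longrightarrow> 12 * r \<le> (6::nat) ^ (r - 1)"
proof (induction r rule: nat_induct_at_least)
  case base then show ?case by simp
next
  case (Suc r)
  have "12 * Suc r \<le> 6 * (12 * r)" using Suc.hyps by simp
  also have "\<dots> \<le> 6 * 6 ^ (r - 1)" using Suc.IH by simp
  also have "\<dots> = 6 ^ (Suc r - 1)" using Suc.hyps by (cases r) auto
  finally show ?case .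
qed

lemma sq_le_pow2: "k \<ge> 4 \<Longrightarrow> k^2 \<le> (2::nat)^k"
proof (induction k rule: nat_induct_at_least)
  case base then show ?case by simp
next
  case (Suc k)
  have "(Suc k)^2 = k^2 + 2*k + 1" by (simp add: power2_eq_square)
  also have "\<dots> \<le> 2 * k^2"
  proof -
    have "4 * k \<le> k * k" using Suc.hyps by (intro mult_right_mono) auto
    then show ?thesis using Suc.hyps unfolding power2_eq_square by linarith
  qed
  also have "\<dots> \<le> 2 * 2^k" using Suc.IH by simp
  finally show ?case by simp
qed

lemma L_bound:
  fixes q L m n r :: nat
  assumes "q \<ge> 4" "2^L \<le> 2*m" "m \<le> n" "n < (q+1)^r"
  shows "2*L \<le> (q+1)*r + 1"
proof (cases L)
  case 0 then show ?thesis by simp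
next
  case (Suc L')
  have "2^L' \<le> m" using assms(2) Suc by simp
  then have "2^L' < (q+1)^r" using assms(3,4) by linarith
  then have "(2^L')^2 < ((q+1)^r)^2" by (simp add: power_strict_mono)
  also have "\<dots> = ((q+1)^2)^r" by (simp add: power_mult[symmetric] mult.commute)
  also have "\<dots> \<le> (2^(q+1))^r"
  proof -
    have "(q+1)^2 \<le> (2::nat)^(q+1)" using sq_le_pow2[of "q+1"] assms(1) by simp
    then show ?thesis by (rule power_mono) simp
  qed
  finally have "(2^L')^2 < ((2::nat)^(q+1))^r" .
  then have "(2::nat)^(L'*2) < 2^((q+1)*r)" by (simp only: power_mult)
  then have "L'*2 < (q+1)*r" by (rule power_less_imp_less_exp[rotated]) simp
  then show ?thesis using Suc by simp
qed

lemma numeric: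
  fixes n r a b m L k :: nat and y :: real
  assumes r: "r \<ge> 3" and y: "y \<ge> 6" and nP: "real n \<ge> 12 * r * y" and n217: "n \<ge> 217"
    and exp: "a*(m-a) \<le> L*2^L*b" and am: "a \<le> m" and Lm: "2^L \<le> 2*m" and mn: "m \<le> n"
    and nm: "n \<le> m+1" and an: "2*a \<le> n" and ka: "k \<le> a + (n - n div 2) + 1"
    and kb: "k + b \<le> n + 1" and Ly: "2 * real L \<le> (y+1)*r + 1"
  shows "real k \<le> real n - real n / (12 * r * y)"
proof (rule ccontr)
  assume neg: "\<not> ?thesis"
  define d where "d = real n - real k"
  define P where "P = real r * y"
  define N where "N = real n"
  have r3: "real r \<ge> 3" using r by simp
  have P18: "P \<ge> 18"
  proof -
    have "(3::real) * 6 \<le> real r * y" using r3 y by (intro mult_mono) auto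
    then show ?thesis unfolding P_def by simp
  qed
  have Pr: "P \<ge> 6 * r"
  proof -
    have "real r * 6 \<le> real r * y" by (rule mult_left_mono) (use y in auto)
    then show ?thesis unfolding P_def by simp
  qed
  have NP: "N \<ge> 12 * P" using nP unfolding N_def P_def by (simp add: mult.assoc)
  have Npos: "N \<ge> 217" unfolding N_def using n217 by simp
  have dT: "d < N / (12 * P)" using neg unfolding d_def N_def P_def by (simp add: mult.assoc)
  have T1: "N / (12 * P) \<ge> 1" using NP P18 by simp
  have T216: "N / (12 * P) \<le> N / 216"
    using P18 Npos by (intro divide_left_mono) auto
  have F1: "2 * real a \<ge> N - 2*d - 3"
  proof -
    have "2 * (n - n div 2) \<le> n + 1" by linarith
    then have "2 * k \<le> 2*a + n + 3" using ka by linarith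
    then have "2 * real k \<le> 2 * real a + N + 3" unfolding N_def by linarith
    then show ?thesis unfolding d_def N_def by (simp add: algebra_simps)
  qed
  have F2: "2 * (real m - real a) \<ge> N - 2"
  proof -
    have "real n \<le> real (m+1)" using nm by (simp only: of_nat_le_iff)
    moreover have "real (2*a) \<le> real n" using an by (simp only: of_nat_le_iff)
    ultimately show ?thesis unfolding N_def by simp
  qed
  have F3: "real b \<le> d + 1" using kb unfolding d_def by linarith
  have F4: "real a * (real m - real a) \<le> real L * (2 * N) * real b"
  proof -
    have "real (a*(m-a)) \<le> real (L*2^L*b)" using exp by linarith
    then have "real a * (real m - real a) \<le> real L * 2^L * real b" using am by (simp add: of_nat_diff)
    also have "\<dots> \<le> real L * (2 * N) * real b"
    proof -
      have "(2::nat)^L \<le> 2*n" using Lm mn by linarith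
      then have "real ((2::nat)^L) \<le> real (2*n)" by (simp only: of_nat_le_iff)
      then have "(2::real)^L \<le> 2 * N" unfolding N_def by simp
      then show ?thesis by (intro mult_right_mono mult_left_mono) auto
    qed
    finally show ?thesis .
  qed
  have e1: "N - 2*d - 3 \<ge> (97/100) * N"
  proof -
    have "2*d \<le> N / 108" using dT T216 by linarith
    moreover have "3 \<le> 3 * N / 217" using Npos by simp
    ultimately show ?thesis using Npos by linarith
  qed
  have e2: "N - 2 \<ge> (99/100) * N" using Npos by simp
  have LHS: "(9603/10000) * N^2 \<le> 4 * (real a * (real m - real a))"
  proof -
    have "(9603/10000) * N^2 = ((97/100) * N) * ((99/100) * N)" by (simp add: power2_eq_square)
    also have "\<dots> \<le> (2 * real a) * (2 * (real m - real a))"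
    proof -
      have i1: "(97/100)*N \<le> 2*real a" using e1 F1 by linarith
      have i2: "(99/100)*N \<le> 2*(real m - real a)" using e2 F2 by linarith
      show ?thesis by (rule mult_mono[OF i1 i2]) (use i1 Npos in linarith)+
    qed
    finally show ?thesis by (simp add: algebra_simps)
  qed
  have e3: "(y+1) * r + 1 \<le> 11/9 * P" using Pr P18 unfolding P_def by (simp add: algebra_simps)
  have e4: "d + 1 \<le> N / (6 * P)"
  proof -
    have "N / (6*P) = 2 * (N / (12 * P))" by simp
    then show ?thesis using dT T1 by linarith
  qed
  have b0: "real b \<ge> 0" by simp
  have RHS: "4 * (real a * (real m - real a)) \<le> 22/27 * N^2"
  proof -
    have "4 * (real a * (real m - real a)) \<le> 4 * (real L * (2 * N) * real b)" using F4 by linarith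
    also have "\<dots> = (2 * real L) * (4 * N) * real b" by simp
    also have "\<dots> \<le> (11/9 * P) * (4 * N) * (N / (6 * P))"
    proof -
      have i1: "2 * real L \<le> 11/9 * P" using Ly e3 by linarith
      have i2: "real b \<le> N / (6 * P)" using F3 e4 by linarith
      have j: "(2*real L)*(4*N) \<le> (11/9*P)*(4*N)" by (rule mult_right_mono[OF i1]) (use Npos in simp)
      show ?thesis by (rule mult_mono[OF j i2]) (use P18 Npos in simp_all)
    qed
    also have "\<dots> = 22/27 * N^2" using P18 by (simp add: power2_eq_square field_simps)
    finally show ?thesis .
  qed
  have "(9603/10000) * N^2 \<le> 22/27 * N^2" using LHS RHS by linarith
  moreover have "N^2 > 0" using Npos by simp
  ultimately show False by simp
qed



theorem theorem1p7:
  fixes r n :: nat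
  assumes "r \<ge> 3" and "n > 6 ^ r"
  shows "real (g r n) \<le> real n - (1 / (12 * real r)) * real n powr ((real r - 1) / real r)"
proof -
  have r: "r \<ge> 3" using assms(1) .
  have "(6::nat)^3 \<le> 6^r" using r by (intro power_increasing) auto
  then have n217: "n \<ge> 217" using assms(2) by simp
  have n4: "n \<ge> 4" using n217 by simp
  define Q where "Q s = (\<forall>(H :: nat set set) (Ms :: nat \<Rightarrow> nat set set).
      (r_partite_uniform r H \<and>
       (\<forall>i<n. matching (Ms i) \<and> Ms i \<subseteq> H \<and> finite (Ms i) \<and> card (Ms i) = n))
      \<longrightarrow> (\<exists>M. rainbow n Ms M \<and> finite M \<and> card M = s))" for s
  have gdef: "g r n = Greatest Q" unfolding g_def Q_def by simp
  have Q0: "Q 0" unfolding Q_def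
  proof (intro allI impI)
    fix H :: "nat set set" and Ms :: "nat \<Rightarrow> nat set set"
    show "\<exists>M. rainbow n Ms M \<and> finite M \<and> card M = 0"
      by (rule exI[of _ "{}"]) (simp add: rainbow_def matching_def)
  qed
  have inst: "\<exists>M. rainbow n (MS r n) M \<and> finite M \<and> card M = s" if "Q s" for s
    using that instance_ok[OF r n4] unfolding Q_def by blast
  have Qb: "s \<le> n" if Qs: "Q s" for s
  proof -
    obtain M where M: "rainbow n (MS r n) M" "finite M" "card M = s" using inst[OF Qs] by blast
    obtain \<phi> where phi: "inj_on \<phi> M" "\<forall>e\<in>M. \<phi> e < n" using M(1) unfolding rainbow_def by blast
    have "\<phi> ` M \<subseteq> {..<n}" using phi(2) by auto
    then have "card M \<le> card {..<n}" using card_inj_on_le[OF phi(1)] by blast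
    then show ?thesis using M(3) by simp
  qed
  have "Q (Greatest Q)" using GreatestI_nat[of Q 0 n] Q0 Qb by blast
  then obtain M where M: "rainbow n (MS r n) M" "finite M" "card M = g r n"
    using inst gdef by metis
  obtain S where S: "S \<subseteq> {..<mm n}" "card S \<le> n div 2" "card M \<le> card S + (n - n div 2) + 1"
    "card M + card (((\<lambda>x. (2*x) mod mm n) ` S \<union> (\<lambda>x. (2*x+1) mod mm n) ` S) - S) \<le> n + 1"
    using rainbow_bound[OF r n4 M(1,2)] by blast
  define m where "m = mm n"
  have mp: "odd m" "m \<le> n" "n \<le> m + 1" "m \<ge> 3" using mm_props[OF n4] m_def by auto
  obtain j where j: "2^j \<le> m" "m < 2^(j+1)" using ex_power_ivl1[of 2 m] mp by auto
  define L where "L = j + 1"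
  have mL: "m \<le> 2^L" "2^L \<le> 2*m" using j unfolding L_def by auto
  define b where "b = card (((\<lambda>x. (2*x) mod m) ` S \<union> (\<lambda>x. (2*x+1) mod m) ` S) - S)"
  have exp: "card S * (m - card S) \<le> L * 2^L * b"
    unfolding b_def by (rule expansion) (use mp S(1) mL m_def in auto)
  have finS: "finite S" using S(1) finite_subset by blast
  have am: "card S \<le> m"
  proof -
    have "card S \<le> card {..<m}" using S(1) m_def by (intro card_mono) auto
    then show ?thesis by simp
  qed
  define y where "y = real n powr (1 / real r)"
  have npos: "real n > 0" using n4 by simp
  have ypos: "y > 0" unfolding y_def using npos by simp
  have yr: "y ^ r = real n"
  proof -
    have "y ^ r = y powr (real r)" using ypos by (simp add: powr_realpow)
    also have "\<dots> = real n powr (1 / real r * real r)" unfolding y_def by (simp add: powr_powr)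
    also have "\<dots> = real n" using r npos by simp
    finally show ?thesis .
  qed
  have y6: "y > 6"
  proof -
    have "(6::real) ^ r < real n" using assms(2)
      by (metis of_nat_less_iff of_nat_numeral of_nat_power)
    then have "((6::real) ^ r) powr (1 / real r) < real n powr (1 / real r)"
      using r by (intro powr_less_mono2) auto
    moreover have "((6::real) ^ r) powr (1 / real r) = 6"
    proof -
      have "((6::real) ^ r) powr (1 / real r) = ((6::real) powr (real r)) powr (1 / real r)"
        by (simp add: powr_realpow)
      also have "\<dots> = 6 powr (real r * (1 / real r))" by (simp add: powr_powr)
      also have "\<dots> = 6" using r by simp
      finally show ?thesis .
    qed
    ultimately show ?thesis unfolding y_def by simp
  qed
  have nP: "real n \<ge> 12 * r * y"
  proof -
    have "real (12 * r) \<le> real (6 ^ (r - 1))" using twelve_le[OF r] by (simp only: of_nat_le_iff)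
    then have "12 * real r \<le> 6 ^ (r - 1)" by simp
    also have "(6::real) ^ (r - 1) \<le> y ^ (r - 1)" using y6 by (intro power_mono) auto
    finally have h: "12 * real r \<le> y ^ (r - 1)" .
    have "real n = y * y ^ (r - 1)" using yr r by (metis Suc_diff_le le_trans one_le_numeral power_Suc diff_Suc_1)
    also have "\<dots> \<ge> y * (12 * real r)" using h ypos by (intro mult_left_mono) auto
    finally show ?thesis by (simp add: mult_ac)
  qed
  define q where "q = nat \<lfloor>y\<rfloor>"
  have q1: "real q \<le> y" "y < real q + 1" unfolding q_def using ypos by linarith+
  have q6: "q \<ge> 6" unfolding q_def using y6 by linarith
  have nq: "n < (q+1)^r"
  proof -
    have "y ^ r < (real q + 1) ^ r" using q1 ypos r by (intro power_strict_mono) auto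
    then have "real n < real ((q+1)^r)" using yr by (simp add: add.commute)
    then show ?thesis by (simp only: of_nat_less_iff)
  qed
  have Lq: "2*L \<le> (q+1)*r + 1" using L_bound[of q L m n r] q6 mL mp nq by simp
  have Ly: "2 * real L \<le> (y+1) * r + 1"
  proof -
    have "real (2*L) \<le> real ((q+1)*r + 1)" using Lq by (simp only: of_nat_le_iff)
    then have "2 * real L \<le> (real q + 1) * real r + 1" by (simp add: algebra_simps)
    also have "\<dots> \<le> (y + 1) * real r + 1" using q1 by (intro add_right_mono mult_right_mono) auto
    finally show ?thesis .
  qed
  have an: "2 * card S \<le> n" using S(2) by linarith
  have main: "real (card M) \<le> real n - real n / (12 * r * y)"
    by (rule numeric[OF r less_imp_le[OF y6] nP n217 exp am mL(2) mp(2) mp(3) an S(3)])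
      (use S(4) Ly in \<open>simp_all add: b_def m_def\<close>)
  have pw: "real n powr ((real r - 1) / real r) = real n / y"
  proof -
    have "(real r - 1) / real r = 1 - 1 / real r" using r by (simp add: field_simps)
    then have "real n powr ((real r - 1) / real r) = real n powr 1 / real n powr (1 / real r)"
      by (simp add: powr_diff)
    then show ?thesis unfolding y_def using npos by simp
  qed
  have "(1 / (12 * real r)) * real n powr ((real r - 1) / real r) = real n / (12 * r * y)"
    unfolding pw by simp
  then show ?thesis using main M(3) by simp
qed


end
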